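(* Fix $p\in(0,1)$ and let $P_n$ be the number of distinct directed source-to-sink paths in a random series-parallel network of size $n$ in the Bernoulli model with parameter $p$. Then $\mathbb{E}(P_1)=1$ and for $n\ge2$ $$\mathbb{E}(P_n)=\frac{2p}{n-1}\sum_{k=1}^{n-1}\mathbb{E}(P_k)+\frac{1-p}{n-1}\sum_{k=1}^{n-1}\mathbb{E}(P_k)\mathbb{E}(P_{n-k}),$$ and the generating function $E(z)=\sum_{n\ge1}\mathbb{E}(P_n)z^{n-1}$ is $$E(z)=\begin{cases}\dfrac{1-2p}{(1-p)(1-z)-p(1-z)^{2p}}, & p\neq\tfrac12,\\[2mm] \dfrac{2}{2(1-z)-(1-z)\log\frac{1}{1-z}}, & p=\tfrac12.\end{cases}$$
   Context: Bernoulli model of series-parallel networks with parameter $p\in(0,1)$: at step $1$ the network is a single edge from the source to the sink; at step $n>1$ one of the $n-1$ edges $(x,y)$ is chosen uniformly at random and with probability $p$ a parallel edge $(x,y)$ is added, with probability $1-p$ the edge is subdivided by a new vertex $z$ into $(x,z),(z,y)$. Size $n$ means the network after step $n$ ($n$ edges). Paths are directed paths following edge orientation (towards the sink). *)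

theory Defs
  imports "HOL-Probability.Probability"
begin

text \<open>A network is a list of directed edges (x,y) (multi-edges allowed, so edges are
identified by their index in the list). Source = vertex 0, sink = vertex 1.\<close>

type_synonym network = "(nat \<times> nat) list"

definition subdivide :: "network \<Rightarrow> nat \<Rightarrow> nat \<Rightarrow> network" where
  "subdivide G i z = G[i := (fst (G ! i), z)] @ [(z, snd (G ! i))]"

definition add_parallel :: "network \<Rightarrow> nat \<Rightarrow> network" where
  "add_parallel G i = G @ [G ! i]"

text \<open>The fresh vertex at a subdivision step is labelled length G + 1, which is unused
(a network with m edges uses only labels 0..m).\<close>
fun sp_net :: "real \<Rightarrow> nat \<Rightarrow> network pmf" where
  "sp_net p 0 = return_pmf [(0, 1)]"
| "sp_net p (Suc 0) = return_pmf [(0, 1)]"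
| "sp_net p (Suc (Suc n)) =
     do { G \<leftarrow> sp_net p (Suc n);
          i \<leftarrow> pmf_of_set {..<length G};
          b \<leftarrow> bernoulli_pmf p;
          return_pmf (if b then add_parallel G i else subdivide G i (length G + 1)) }"

text \<open>A directed source-to-sink path, as the nonempty sequence of (indices of) its edges.\<close>
definition is_st_path :: "network \<Rightarrow> nat list \<Rightarrow> bool" where
  "is_st_path G ps \<longleftrightarrow> ps \<noteq> [] \<and> (\<forall>i\<in>set ps. i < length G)
     \<and> fst (G ! hd ps) = 0 \<and> snd (G ! last ps) = 1
     \<and> (\<forall>j. Suc j < length ps \<longrightarrow> snd (G ! (ps ! j)) = fst (G ! (ps ! Suc j)))"

definition num_paths :: "network \<Rightarrow> nat" where
  "num_paths G = card {ps. is_st_path G ps}"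

definition EP :: "real \<Rightarrow> nat \<Rightarrow> real" where
  "EP p n = measure_pmf.expectation (sp_net p n) (\<lambda>G. real (num_paths G))"

end

theory Submission
  imports Defs "HOL-Computational_Algebra.Polynomial" "HOL-Computational_Algebra.Formal_Power_Series"
begin


fun walk :: "network \<Rightarrow> nat \<Rightarrow> nat list \<Rightarrow> bool" where
  "walk G v [] = (v = 1)"
| "walk G v (e # es) = (e < length G \<and> fst (G ! e) = v \<and> walk G (snd (G ! e)) es)"

lemma all_nat_split: "(\<forall>j::nat. P j) \<longleftrightarrow> P 0 \<and> (\<forall>j. P (Suc j))"
  by (metis not0_implies_Suc)

lemma walk_iff:
  "ps \<noteq> [] \<Longrightarrow> walk G v ps \<longleftrightarrow> (\<forall>i\<in>set ps. i < length G) \<and> fst (G ! hd ps) = v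
     \<and> snd (G ! last ps) = 1 \<and> (\<forall>j. Suc j < length ps \<longrightarrow> snd (G ! (ps ! j)) = fst (G ! (ps ! Suc j)))"
proof (induction ps arbitrary: v)
  case Nil then show ?case by simp
next
  case (Cons e es)
  show ?case
  proof (cases "es = []")
    case True then show ?thesis by auto
  next
    case False
    note IH = Cons.IH[OF False, of "snd (G ! e)"]
    have idx: "(\<forall>j. Suc j < length (e#es) \<longrightarrow> snd (G ! ((e#es) ! j)) = fst (G ! ((e#es) ! Suc j)))
      \<longleftrightarrow> snd (G!e) = fst (G ! hd es) \<and> (\<forall>j. Suc j < length es \<longrightarrow> snd (G ! (es ! j)) = fst (G ! (es ! Suc j)))"
      apply (subst all_nat_split)
      using False by (simp add: hd_conv_nth)
    show ?thesis using IH idx False by auto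
  qed
qed

lemma is_st_path_walk: "is_st_path G ps \<longleftrightarrow> walk G 0 ps"
proof (cases "ps = []")
  case True then show ?thesis by (simp add: is_st_path_def)
next
  case False then show ?thesis by (simp add: is_st_path_def walk_iff)
qed

definition paths :: "network \<Rightarrow> nat list set" where
  "paths G = {ps. walk G 0 ps}"

lemma num_paths_eq: "num_paths G = card (paths G)"
  by (simp add: num_paths_def paths_def is_st_path_walk)

definition ninv :: "network \<Rightarrow> bool" where
  "ninv G \<longleftrightarrow> G \<noteq> [] \<and> (\<forall>e\<in>set G. fst e \<le> length G \<and> snd e \<le> length G)
     \<and> (\<exists>r::nat\<Rightarrow>real. \<forall>e\<in>set G. r (fst e) < r (snd e))"

lemma walk_set: "walk G v ps \<Longrightarrow> e \<in> set ps \<Longrightarrow> e < length G"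
  by (induction ps arbitrary: v) auto

lemma walk_rank:
  assumes r: "\<forall>e\<in>set G. r (fst e) < (r (snd e)::real)"
  shows "walk G v ps \<Longrightarrow> (\<forall>e\<in>set ps. r v \<le> r (fst (G!e))) \<and> distinct ps"
proof (induction ps arbitrary: v)
  case Nil then show ?case by simp
next
  case (Cons e es)
  then have e: "e < length G" "fst (G!e) = v" "walk G (snd (G!e)) es" by auto
  have lt: "r v < r (snd (G!e))" using r e by (metis nth_mem)
  from Cons.IH[OF e(3)] have IH: "\<forall>e'\<in>set es. r (snd (G!e)) \<le> r (fst (G!e'))" "distinct es" by auto
  have "e \<notin> set es" using IH(1) lt e(2) by fastforce
  then show ?case using IH lt e(2) by force
qed

lemma walk_distinct: "ninv G \<Longrightarrow> walk G v ps \<Longrightarrow> distinct ps"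
  unfolding ninv_def using walk_rank by blast

lemma paths_finite: assumes "ninv G" shows "finite (paths G)"
proof -
  have "paths G \<subseteq> {xs. set xs \<subseteq> {..<length G} \<and> length xs \<le> length G}"
  proof
    fix ps assume "ps \<in> paths G"
    then have w: "walk G 0 ps" by (simp add: paths_def)
    have s: "set ps \<subseteq> {..<length G}" using walk_set[OF w] by auto
    have "length ps = card (set ps)" using walk_distinct[OF assms w] by (simp add: distinct_card)
    also have "\<dots> \<le> length G" using card_mono[OF _ s] by simp
    finally show "ps \<in> {xs. set xs \<subseteq> {..<length G} \<and> length xs \<le> length G}" using s by simp
  qed
  then show ?thesis by (rule finite_subset) (simp add: finite_lists_length_le)
qed

lemma ninv_par: assumes "ninv G" "i < length G" shows "ninv (add_parallel G i)"
proof -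
  have m: "G!i \<in> set G" using assms by simp
  from assms obtain r where r: "\<forall>e\<in>set G. r (fst e) < (r (snd e)::real)" unfolding ninv_def by blast
  have "\<forall>e\<in>set (add_parallel G i). r (fst e) < r (snd e)" using r m by (auto simp: add_parallel_def)
  moreover have "\<forall>e\<in>set (add_parallel G i). fst e \<le> length (add_parallel G i) \<and> snd e \<le> length (add_parallel G i)"
  proof -
    have st: "set (add_parallel G i) = insert (G!i) (set G)" by (auto simp: add_parallel_def)
    have "\<forall>e\<in>set G. fst e \<le> length G \<and> snd e \<le> length G" using assms unfolding ninv_def by blast
    moreover have "length (add_parallel G i) = Suc (length G)" by (simp add: add_parallel_def)
    ultimately show ?thesis unfolding st
    proof (intro ballI)
      fix e assume b: "\<forall>e\<in>set G. fst e \<le> length G \<and> snd e \<le> length G"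
        and l: "length (add_parallel G i) = Suc (length G)" and "e \<in> insert (G ! i) (set G)"
      then have "e \<in> set G" using m by auto
      then show "fst e \<le> length (add_parallel G i) \<and> snd e \<le> length (add_parallel G i)"
        using b l by (simp add: le_SucI)
    qed
  qed
  ultimately show ?thesis unfolding ninv_def by (auto simp: add_parallel_def)
qed

lemma ninv_sub: assumes "ninv G" "i < length G" shows "ninv (subdivide G i (length G + 1))"
proof -
  let ?z = "length G + 1"
  obtain x y where xy: "G!i = (x,y)" by fastforce
  have mem: "(x,y) \<in> set G" using assms xy by (metis nth_mem)
  from assms obtain r where r: "\<forall>e\<in>set G. r (fst e) < (r (snd e)::real)" unfolding ninv_def by blast
  have bd: "\<forall>e\<in>set G. fst e \<le> length G \<and> snd e \<le> length G" using assms unfolding ninv_def by blast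
  define r' where "r' = r(?z := (r x + r y)/2)"
  have rxy: "r x < r y" using r mem by force
  have xz: "x \<noteq> ?z" "y \<noteq> ?z" using bd mem by force+
  have S: "set (subdivide G i ?z) \<subseteq> insert (x, ?z) (set G) \<union> {(?z, y)}"
    unfolding subdivide_def using set_update_subset_insert[of G i] xy by auto
  have "\<forall>e\<in>set (subdivide G i ?z). r' (fst e) < r' (snd e)"
  proof
    fix e assume "e \<in> set (subdivide G i ?z)"
    then consider "e = (x,?z)" | "e = (?z,y)" | "e \<in> set G" using S by blast
    then show "r' (fst e) < r' (snd e)"
    proof cases
      case 3
      then have "fst e \<noteq> ?z" "snd e \<noteq> ?z" using bd by force+
      then show ?thesis using r 3 by (simp add: r'_def)
    qed (use xz rxy in \<open>auto simp: r'_def\<close>)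
  qed
  moreover have "\<forall>e\<in>set (subdivide G i ?z). fst e \<le> length (subdivide G i ?z) \<and> snd e \<le> length (subdivide G i ?z)"
  proof
    fix e assume "e \<in> set (subdivide G i ?z)"
    then consider "e = (x,?z)" | "e = (?z,y)" | "e \<in> set G" using S by blast
    then show "fst e \<le> length (subdivide G i ?z) \<and> snd e \<le> length (subdivide G i ?z)"
      by cases (use bd mem in \<open>fastforce simp: subdivide_def\<close>)+
  qed
  ultimately show ?thesis unfolding ninv_def by (auto simp: subdivide_def)
qed

section \<open>Parallel\<close>

lemma par_nth: "i < length G \<Longrightarrow> e < Suc (length G) \<Longrightarrow>
  add_parallel G i ! e = G ! (if e = length G then i else e)"
  by (auto simp: add_parallel_def nth_append)

lemma par_len[simp]: "length (add_parallel G i) = Suc (length G)"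
  by (simp add: add_parallel_def)
lemma par_nth1[simp]: "e < length G \<Longrightarrow> add_parallel G i ! e = G ! e"
  by (simp add: add_parallel_def nth_append)
lemma par_nth2[simp]: "add_parallel G i ! length G = G ! i"
  by (simp add: add_parallel_def nth_append)

lemma walk_par_up: "i < length G \<Longrightarrow> walk G v ps \<Longrightarrow> walk (add_parallel G i) v ps"
  by (induction ps arbitrary: v) auto

lemma walk_par_down: "i < length G \<Longrightarrow> walk (add_parallel G i) v ps \<Longrightarrow> length G \<notin> set ps \<Longrightarrow> walk G v ps"
  by (induction ps arbitrary: v) (auto simp: less_Suc_eq)

lemma walk_par_phi: "i < length G \<Longrightarrow> walk (add_parallel G i) v ps \<Longrightarrow>
   walk G v (map (\<lambda>e. if e = length G then i else e) ps)"
  apply (induction ps arbitrary: v)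
   apply simp
  apply (auto simp: less_Suc_eq)
  done

lemma walk_par_psi: "i < length G \<Longrightarrow> walk G v ps \<Longrightarrow>
   walk (add_parallel G i) v (map (\<lambda>e. if e = i then length G else e) ps)"
  by (induction ps arbitrary: v) auto

lemma paths_par:
  assumes "ninv G" "i < length G"
  shows "paths (add_parallel G i) = paths G \<union> map (\<lambda>e. if e = i then length G else e) ` {ps\<in>paths G. i \<in> set ps}"
    (is "_ = _ \<union> map ?psi ` _")
proof
  let ?phi = "\<lambda>e. if e = length G then i else e"
  show "paths (add_parallel G i) \<subseteq> paths G \<union> map ?psi ` {ps\<in>paths G. i \<in> set ps}"
  proof
    fix ps assume "ps \<in> paths (add_parallel G i)"
    then have w: "walk (add_parallel G i) 0 ps" by (simp add: paths_def)
    show "ps \<in> paths G \<union> map ?psi ` {ps\<in>paths G. i \<in> set ps}"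
    proof (cases "length G \<in> set ps")
      case False then show ?thesis using walk_par_down[OF assms(2) w] by (simp add: paths_def)
    next
      case True
      have w2: "walk G 0 (map ?phi ps)" using walk_par_phi[OF assms(2) w] .
      have "distinct (map ?phi ps)" using walk_distinct[OF assms(1) w2] .
      then have inj: "inj_on ?phi (set ps)" by (simp add: distinct_map)
      have iN: "i \<notin> set ps"
      proof
        assume "i \<in> set ps"
        then have "?phi i = ?phi (length G)" using assms by simp
        then show False using inj_onD[OF inj _ \<open>i \<in> set ps\<close> True] assms(2) by simp
      qed
      have "map ?psi (map ?phi ps) = ps"
        unfolding map_map by (rule map_idI) (use iN in auto)
      moreover have "i \<in> set (map ?phi ps)" using True by force
      ultimately show ?thesis using w2 by (force simp: paths_def)
    qed
  qed
next
  show "paths G \<union> map ?psi ` {ps\<in>paths G. i \<in> set ps} \<subseteq> paths (add_parallel G i)"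
    using walk_par_up[OF assms(2)] walk_par_psi[OF assms(2)] by (auto simp: paths_def)
qed

lemma sum_paths_par:
  fixes w :: "nat \<Rightarrow> 'a::comm_monoid_add"
  assumes "ninv G" "i < length G"
  shows "(\<Sum>ps\<in>paths (add_parallel G i). w (length ps))
     = (\<Sum>ps\<in>paths G. w (length ps)) + (\<Sum>ps\<in>paths G. if i \<in> set ps then w (length ps) else 0)"
proof -
  let ?psi = "\<lambda>e. if e = i then length G else e"
  let ?phi = "\<lambda>e. if e = length G then i else e"
  let ?B = "{ps\<in>paths G. i \<in> set ps}"
  have fin: "finite (paths G)" using paths_finite[OF assms(1)] .
  have inv: "map ?phi (map ?psi ps) = ps" if "ps \<in> paths G" for ps
  proof -
    have "\<forall>e\<in>set ps. e < length G" using that walk_set by (auto simp: paths_def)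
    then show ?thesis unfolding map_map by (intro map_idI) auto
  qed
  have inj: "inj_on (map ?psi) ?B" by (rule inj_on_inverseI[where g="map ?phi"]) (use inv in auto)
  have disj: "paths G \<inter> map ?psi ` ?B = {}"
  proof -
    have "length G \<notin> set ps" if "ps \<in> paths G" for ps using that walk_set by (force simp: paths_def)
    moreover have "length G \<in> set (map ?psi ps)" if "ps \<in> ?B" for ps using that by force
    ultimately show ?thesis by blast
  qed
  have "(\<Sum>ps\<in>paths (add_parallel G i). w (length ps))
      = (\<Sum>ps\<in>paths G. w (length ps)) + (\<Sum>ps\<in>map ?psi ` ?B. w (length ps))"
    unfolding paths_par[OF assms] by (rule sum.union_disjoint) (use fin disj in auto)
  also have "(\<Sum>ps\<in>map ?psi ` ?B. w (length ps)) = (\<Sum>ps\<in>?B. w (length ps))"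
    by (subst sum.reindex[OF inj]) simp
  also have "\<dots> = (\<Sum>ps\<in>paths G. if i \<in> set ps then w (length ps) else 0)"
    using fin by (simp add: sum.inter_filter)
  finally show ?thesis .
qed

section \<open>Subdivision\<close>

lemma sub_len[simp]: "length (subdivide G i z) = Suc (length G)"
  by (simp add: subdivide_def)
lemma sub_nth1[simp]: "e < length G \<Longrightarrow> e \<noteq> i \<Longrightarrow> subdivide G i z ! e = G ! e"
  by (simp add: subdivide_def nth_append)
lemma sub_nth2[simp]: "i < length G \<Longrightarrow> subdivide G i z ! i = (fst (G!i), z)"
  by (simp add: subdivide_def nth_append)
lemma sub_nth3[simp]: "subdivide G i z ! length G = (z, snd (G!i))"
  by (simp add: subdivide_def nth_append)

definition ins :: "nat \<Rightarrow> nat \<Rightarrow> nat list \<Rightarrow> nat list" where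
  "ins i m ps = concat (map (\<lambda>e. if e = i then [i, m] else [e]) ps)"

lemma ins_simps[simp]: "ins i m [] = []" "ins i m (e # es) = (if e = i then i # m # ins i m es else e # ins i m es)"
  by (simp_all add: ins_def)

lemma walk_sub_up: "i < length G \<Longrightarrow> walk G v ps \<Longrightarrow> walk (subdivide G i z) v (ins i (length G) ps)"
  by (induction ps arbitrary: v) auto

lemma filter_ins: "m \<notin> set ps \<Longrightarrow> i \<noteq> m \<Longrightarrow> filter (\<lambda>e. e \<noteq> m) (ins i m ps) = ps"
  by (induction ps) auto

lemma len_ins: "distinct ps \<Longrightarrow> length (ins i m ps) = length ps + (if i \<in> set ps then 1 else 0)"
  by (induction ps) auto

lemma walk_sub_down:
  assumes "ninv G" "i < length G"
  shows "\<forall>v. walk (subdivide G i (length G + 1)) v ps \<longrightarrow> v \<noteq> length G + 1 \<longrightarrow>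
     walk G v (filter (\<lambda>e. e \<noteq> length G) ps) \<and> ins i (length G) (filter (\<lambda>e. e \<noteq> length G) ps) = ps"
proof (induction ps rule: length_induct)
  case (1 ps)
  let ?m = "length G" let ?z = "length G + 1" let ?G' = "subdivide G i (length G + 1)"
  have bd: "\<forall>e\<in>set G. fst e \<le> length G \<and> snd e \<le> length G" using assms unfolding ninv_def by blast
  have fresh: "fst (G!e) \<noteq> ?z" "snd (G!e) \<noteq> ?z" if "e < length G" for e
    using bd that nth_mem by fastforce+
  show ?case
  proof (intro allI impI)
    fix v assume w: "walk ?G' v ps" and vz: "v \<noteq> ?z"
    show "walk G v (filter (\<lambda>e. e \<noteq> ?m) ps) \<and> ins i ?m (filter (\<lambda>e. e \<noteq> ?m) ps) = ps"
    proof (cases ps)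
      case Nil then show ?thesis using w by simp
    next
      case (Cons e es)
      from w Cons have e: "e < Suc ?m" "fst (?G'!e) = v" "walk ?G' (snd (?G'!e)) es" by auto
      consider "e = ?m" | "e = i" | "e < ?m" "e \<noteq> i" using e(1) by linarith
      then show ?thesis
      proof cases
        case 1 then show ?thesis using e vz by simp
      next
        case 2
        then have wz: "walk ?G' ?z es" "v = fst (G!i)" using e assms(2) by auto
        show ?thesis
        proof (cases es)
          case Nil then show ?thesis using wz assms(2) by simp
        next
          case (Cons e' es')
          from wz Cons have e': "e' < Suc ?m" "fst (?G'!e') = ?z" "walk ?G' (snd (?G'!e')) es'" by auto
          have em: "e' = ?m"
          proof (rule ccontr)
            assume "e' \<noteq> ?m"
            then have "e' < ?m" using e' by simp
            then show False using e'(2) fresh assms(2) by (cases "e' = i") auto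
          qed
          then have wy: "walk ?G' (snd (G!i)) es'" using e' by simp
          have "length es' < length ps" using \<open>ps = e # es\<close> Cons by simp
          with 1 have IH: "walk G (snd (G!i)) (filter (\<lambda>e. e \<noteq> ?m) es') \<and> ins i ?m (filter (\<lambda>e. e \<noteq> ?m) es') = es'"
            using wy fresh assms(2) by blast
          show ?thesis using IH \<open>ps = e # es\<close> Cons em 2 assms(2) wz(2) by auto
        qed
      next
        case 3
        then have g: "?G'!e = G!e" by simp
        have "length es < length ps" using Cons by simp
        with 1 have IH: "walk G (snd (G!e)) (filter (\<lambda>e. e \<noteq> ?m) es) \<and> ins i ?m (filter (\<lambda>e. e \<noteq> ?m) es) = es"
          using e(3) g fresh 3 by fastforce
        show ?thesis using IH Cons 3 e g by auto
      qed
    qed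
  qed
qed

lemma sum_paths_sub:
  fixes w :: "nat \<Rightarrow> 'a::comm_monoid_add"
  assumes "ninv G" "i < length G"
  shows "(\<Sum>ps\<in>paths (subdivide G i (length G + 1)). w (length ps))
     = (\<Sum>ps\<in>paths G. w (length ps + (if i \<in> set ps then 1 else 0)))"
proof -
  let ?m = "length G"
  have eq: "paths (subdivide G i (length G + 1)) = ins i ?m ` paths G"
  proof
    show "paths (subdivide G i (length G + 1)) \<subseteq> ins i ?m ` paths G"
    proof
      fix ps assume "ps \<in> paths (subdivide G i (length G + 1))"
      then have "walk (subdivide G i (length G + 1)) 0 ps" by (simp add: paths_def)
      then have "walk G 0 (filter (\<lambda>e. e \<noteq> ?m) ps) \<and> ins i ?m (filter (\<lambda>e. e \<noteq> ?m) ps) = ps"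
        using walk_sub_down[OF assms, of ps] by simp
      then show "ps \<in> ins i ?m ` paths G" by (force simp: paths_def)
    qed
  next
    show "ins i ?m ` paths G \<subseteq> paths (subdivide G i (length G + 1))"
      using walk_sub_up[OF assms(2)] by (auto simp: paths_def)
  qed
  have inj: "inj_on (ins i ?m) (paths G)"
  proof (rule inj_on_inverseI[where g="filter (\<lambda>e. e \<noteq> ?m)"])
    fix ps assume "ps \<in> paths G"
    then have "?m \<notin> set ps" using walk_set by (force simp: paths_def)
    then show "filter (\<lambda>e. e \<noteq> ?m) (ins i ?m ps) = ps" using filter_ins assms(2) by simp
  qed
  show ?thesis unfolding eq
    apply (subst sum.reindex[OF inj])
    apply (rule sum.cong[OF refl])
    using len_ins walk_distinct[OF assms(1)] by (auto simp: paths_def)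
qed



definition PX :: "real poly" where "PX = [:0, 1:]"

definition FP :: "network \<Rightarrow> real poly" where
  "FP G = (\<Sum>ps\<in>paths G. PX ^ length ps)"

definition qp :: "real \<Rightarrow> real poly" where "qp p = [:0, 2*p - 1, 1 - p:]"
definition rr :: "real \<Rightarrow> real poly" where "rr p = smult (2*p - 1) 1 + smult (1 - p) PX"

lemma qp_rr: "qp p = PX * rr p" by (simp add: qp_def rr_def PX_def)

lemma smult_sum_right: "smult c (sum f S) = (\<Sum>x\<in>S. smult c (f x))"
  by (induct S rule: infinite_finite_induct) (simp_all add: smult_add_right)

lemma pderiv_sum: "pderiv (sum f S) = (\<Sum>x\<in>S. pderiv (f x))"
  by (induct S rule: infinite_finite_induct) (simp_all add: pderiv_add)

lemma count_sum:
  fixes c :: "real poly"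
  fixes ps :: "nat list"
  assumes "set ps \<subseteq> {..<m}" "distinct ps"
  shows "(\<Sum>i<m. if i \<in> set ps then c else 0) = smult (real (length ps)) c"
proof -
  have "(\<Sum>i<m. if i \<in> set ps then c else 0) = (\<Sum>i\<in>{..<m} \<inter> set ps. c)"
    using sum.inter_restrict[of "{..<m}" "\<lambda>_. c" "set ps"] by simp
  also have "{..<m} \<inter> set ps = set ps" using assms by auto
  also have "(\<Sum>i\<in>set ps. c) = of_nat (card (set ps)) * c" by simp
  also have "\<dots> = smult (real (length ps)) c" using assms(2) by (simp add: distinct_card of_nat_mult_conv_smult)
  finally show ?thesis .
qed

lemma qp_pderiv: "qp p * pderiv (PX ^ l) = smult (real l) (PX ^ l * rr p)"
proof (cases l)
  case 0 then show ?thesis by simp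
next
  case (Suc k)
  have q: "qp p = PX * rr p" by (rule qp_rr)
  have dp: "pderiv PX = 1" by (simp add: PX_def pderiv_pCons)
  have d: "pderiv (PX ^ Suc k) = smult (real (Suc k)) (PX ^ k)"
    using pderiv_power[of PX "Suc k"] by (simp add: dp)
  show ?thesis unfolding Suc d q by (simp add: algebra_simps)
qed

lemma term_id:
  "smult p (smult (real l) (PX ^ l)) + smult (1 - p) (smult (real l) (PX ^ (l + 1) - PX ^ l))
   = smult (real l) (PX ^ l * rr p)"
proof -
  have g: "smult p (smult l a) + smult (1-p) (smult l (b - a)) = smult l (smult (2*p-1) a + smult (1-p) b)"
    for a b :: "real poly" and l :: real by (simp add: poly_eq_iff algebra_simps)
  show ?thesis unfolding rr_def using g[of "real l" "PX ^ l" "PX ^ (l+1)"]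
    by (simp add: algebra_simps smult_add_right)
qed

lemma step_identity:
  assumes inv: "ninv G" and p01: "0 \<le> p" "p \<le> 1"
  shows "(\<Sum>i<length G. smult p (FP (add_parallel G i)) + smult (1-p) (FP (subdivide G i (length G + 1))))
     = smult (real (length G)) (FP G) + qp p * pderiv (FP G)"
proof -
  let ?m = "length G"
  let ?P = "paths G"
  have fin: "finite ?P" using paths_finite[OF inv] .
  have dist: "distinct ps" and sub: "set ps \<subseteq> {..<?m}" if "ps \<in> ?P" for ps
    using that walk_distinct[OF inv] walk_set by (auto simp: paths_def)
  have par: "FP (add_parallel G i) = FP G + (\<Sum>ps\<in>?P. if i \<in> set ps then PX ^ length ps else 0)"
    if "i < ?m" for i
    unfolding FP_def using sum_paths_par[OF inv that, of "\<lambda>l. PX ^ l"] by simp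
  have sb: "FP (subdivide G i (Suc ?m)) = FP G + (\<Sum>ps\<in>?P. if i \<in> set ps then PX ^ (length ps + 1) - PX ^ length ps else 0)"
    if "i < ?m" for i
    unfolding FP_def Suc_eq_plus1 sum_paths_sub[OF inv that, of "\<lambda>l. PX ^ l"]
    by (simp add: sum.distrib[symmetric]) (rule sum.cong, auto)
  have swap: "(\<Sum>i<?m. \<Sum>ps\<in>?P. if i \<in> set ps then c ps else 0) = (\<Sum>ps\<in>?P. smult (real (length ps)) (c ps))"
    for c :: "nat list \<Rightarrow> real poly"
    by (subst sum.swap) (rule sum.cong[OF refl], rule count_sum[OF sub dist])
  have "(\<Sum>i<?m. smult p (FP (add_parallel G i)) + smult (1-p) (FP (subdivide G i (?m + 1))))
     = (\<Sum>i<?m. FP G + smult p (\<Sum>ps\<in>?P. if i \<in> set ps then PX ^ length ps else 0)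
          + smult (1-p) (\<Sum>ps\<in>?P. if i \<in> set ps then PX ^ (length ps + 1) - PX ^ length ps else 0))"
    by (rule sum.cong[OF refl]) (simp add: par sb smult_add_right algebra_simps smult_add_left[symmetric])
  also have "\<dots> = smult (real ?m) (FP G)
      + smult p (\<Sum>ps\<in>?P. smult (real (length ps)) (PX ^ length ps))
      + smult (1-p) (\<Sum>ps\<in>?P. smult (real (length ps)) (PX ^ (length ps + 1) - PX ^ length ps))"
    by (simp add: sum.distrib smult_sum_right[symmetric] swap of_nat_mult_conv_smult)
  also have "\<dots> = smult (real ?m) (FP G) + (\<Sum>ps\<in>?P. smult (real (length ps)) (PX ^ length ps * rr p))"
    by (simp only: smult_sum_right sum.distrib[symmetric] add.assoc term_id)
  also have "(\<Sum>ps\<in>?P. smult (real (length ps)) (PX ^ length ps * rr p)) = qp p * pderiv (FP G)"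
    by (simp add: FP_def pderiv_sum sum_distrib_left qp_pderiv)
  finally show ?thesis .
qed



definition PE :: "'a pmf \<Rightarrow> ('a \<Rightarrow> real poly) \<Rightarrow> real poly" where
  "PE M f = (\<Sum>a\<in>set_pmf M. smult (pmf M a) (f a))"

lemma coeff_PE: "finite (set_pmf M) \<Longrightarrow> coeff (PE M f) j = measure_pmf.expectation M (\<lambda>a. coeff (f a) j)"
  by (simp add: PE_def coeff_sum integral_measure_pmf[where A="set_pmf M"])

lemma poly_PE: "finite (set_pmf M) \<Longrightarrow> poly (PE M f) x = measure_pmf.expectation M (\<lambda>a. poly (f a) x)"
  by (simp add: PE_def poly_sum integral_measure_pmf[where A="set_pmf M"])

lemma PE_return: "PE (return_pmf x) f = f x"
  by (simp add: PE_def)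

lemma PE_lin: "PE M (\<lambda>a. f a + smult c (qp p * pderiv (f a))) = PE M f + smult c (qp p * pderiv (PE M f))"
  by (simp add: PE_def smult_add_right sum.distrib pderiv_sum pderiv_smult smult_sum_right
      sum_distrib_left mult_smult_right smult_smult mult.commute)

definition step :: "real \<Rightarrow> network \<Rightarrow> network pmf" where
  "step p G = pmf_of_set {..<length G} \<bind> (\<lambda>i. bernoulli_pmf p \<bind>
      (\<lambda>b. return_pmf (if b then add_parallel G i else subdivide G i (length G + 1))))"

lemma sp_SS: "sp_net p (Suc (Suc n)) = sp_net p (Suc n) \<bind> step p"
proof -
  have "step p = (\<lambda>G. pmf_of_set {..<length G} \<bind> (\<lambda>i. bernoulli_pmf p \<bind>
      (\<lambda>b. return_pmf (if b then add_parallel G i else subdivide G i (length G + 1)))))"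
    by (rule ext) (simp add: step_def)
  then show ?thesis by simp
qed

lemma set_step: "G \<noteq> [] \<Longrightarrow> set_pmf (step p G) \<subseteq>
   (\<lambda>i. add_parallel G i) ` {..<length G} \<union> (\<lambda>i. subdivide G i (length G + 1)) ` {..<length G}"
proof -
  assume "G \<noteq> []"
  then have "{..<length G} \<noteq> {}" by auto
  then show ?thesis by (auto simp: step_def set_bind_pmf set_pmf_of_set split: if_splits)
qed

lemma finite_step: "G \<noteq> [] \<Longrightarrow> finite (set_pmf (step p G))"
  by (rule finite_subset[OF set_step]) auto

lemma ninv_base: "ninv [(0,1)]"
  unfolding ninv_def by (auto intro!: exI[where x="\<lambda>n. real n"])

lemma sp_support: "finite (set_pmf (sp_net p (Suc n))) \<and> (\<forall>G\<in>set_pmf (sp_net p (Suc n)). ninv G \<and> length G = Suc n)"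
proof (induction n)
  case 0 then show ?case using ninv_base by simp
next
  case (Suc n)
  have ne: "G \<noteq> []" if "G \<in> set_pmf (sp_net p (Suc n))" for G using Suc that by auto
  have "finite (set_pmf (sp_net p (Suc (Suc n))))"
    unfolding sp_SS set_bind_pmf using Suc finite_step ne by auto
  moreover have "ninv G' \<and> length G' = Suc (Suc n)" if "G' \<in> set_pmf (sp_net p (Suc (Suc n)))" for G'
  proof -
    from that obtain G where G: "G \<in> set_pmf (sp_net p (Suc n))" "G' \<in> set_pmf (step p G)"
      unfolding sp_SS set_bind_pmf by auto
    have i: "ninv G" "length G = Suc n" using Suc G by auto
    from set_step[OF ne[OF G(1)]] G(2) obtain i where "i < length G"
      "G' = add_parallel G i \<or> G' = subdivide G i (length G + 1)" by blast
    moreover have "ninv (add_parallel G i)" "ninv (subdivide G i (length G + 1))"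
      using ninv_par ninv_sub i(1) \<open>i < length G\<close> by auto
    ultimately show ?thesis using i by (auto simp: add_parallel_def)
  qed
  ultimately show ?case by blast
qed

lemma expect_step:
  assumes "G \<noteq> []" "0 \<le> p" "p \<le> 1"
  shows "measure_pmf.expectation (step p G) h =
    (\<Sum>i<length G. p * h (add_parallel G i) + (1 - p) * h (subdivide G i (length G + 1))) / real (length G)"
proof -
  have inner: "measure_pmf.expectation (bernoulli_pmf p \<bind>
      (\<lambda>b. return_pmf (if b then add_parallel G i else subdivide G i (length G + 1)))) h
     = p * h (add_parallel G i) + (1 - p) * h (subdivide G i (length G + 1))" for i
    apply (subst pmf_expectation_bind[where A=UNIV])
       apply simp_all
    apply (simp add: UNIV_bool assms)
    done
  have fin: "finite (set_pmf (bernoulli_pmf p \<bind>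
      (\<lambda>b. return_pmf (if b then add_parallel G i else subdivide G i (length G + 1)))))" for i
  proof -
    have "finite (set_pmf (bernoulli_pmf p))" by (rule finite_subset[OF subset_UNIV]) simp
    then show ?thesis by (simp add: set_bind_pmf)
  qed
  show ?thesis
  proof -
    have ne: "{..<length G} \<noteq> {}" using assms by auto
    show ?thesis unfolding step_def
      by (subst pmf_expectation_bind_pmf_of_set) (use assms fin ne in \<open>simp_all add: inner sum_divide_distrib divide_inverse mult.commute sum_distrib_left\<close>)
  qed
qed

definition A :: "real \<Rightarrow> nat \<Rightarrow> real poly" where
  "A p n = PE (sp_net p n) FP"

lemma A_rec:
  assumes "0 \<le> p" "p \<le> 1"
  shows "A p (Suc (Suc n)) = A p (Suc n) + smult (1 / real (Suc n)) (qp p * pderiv (A p (Suc n)))"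
proof -
  let ?S = "set_pmf (sp_net p (Suc n))"
  let ?T = "\<lambda>G. FP G + smult (1 / real (Suc n)) (qp p * pderiv (FP G))"
  have S: "finite ?S" "\<And>G. G \<in> ?S \<Longrightarrow> ninv G \<and> length G = Suc n" using sp_support[of p n] by auto
  have ne: "G \<noteq> []" if "G \<in> ?S" for G using S(2)[OF that] by auto
  have finSS: "finite (set_pmf (sp_net p (Suc (Suc n))))" using sp_support[of p "Suc n"] by auto
  have stepT: "measure_pmf.expectation (step p G) (\<lambda>G'. coeff (FP G') j) = coeff (?T G) j" if "G \<in> ?S" for G j
  proof -
    have i: "ninv G" "length G = Suc n" using S(2)[OF that] by auto
    have "measure_pmf.expectation (step p G) (\<lambda>G'. coeff (FP G') j)
       = coeff (smult (1 / real (length G)) (\<Sum>i<length G. smult p (FP (add_parallel G i))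
            + smult (1-p) (FP (subdivide G i (length G + 1))))) j"
      by (simp add: expect_step[OF ne[OF that] assms] coeff_sum divide_inverse mult.commute)
    also have "\<dots> = coeff (?T G) j"
      unfolding step_identity[OF i(1) assms] by (simp add: smult_add_right i(2))
    finally show ?thesis .
  qed
  have "A p (Suc (Suc n)) = PE (sp_net p (Suc n)) ?T"
  proof (rule poly_eqI)
    fix j
    have "coeff (A p (Suc (Suc n))) j = measure_pmf.expectation (sp_net p (Suc (Suc n))) (\<lambda>G. coeff (FP G) j)"
      unfolding A_def by (rule coeff_PE[OF finSS])
    also have "\<dots> = (\<Sum>G\<in>?S. pmf (sp_net p (Suc n)) G *\<^sub>R measure_pmf.expectation (step p G) (\<lambda>G'. coeff (FP G') j))"
      unfolding sp_SS by (rule pmf_expectation_bind) (use S(1) finite_step ne in auto)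
    also have "\<dots> = (\<Sum>G\<in>?S. pmf (sp_net p (Suc n)) G * coeff (?T G) j)"
      by (rule sum.cong) (simp_all add: stepT)
    also have "\<dots> = coeff (PE (sp_net p (Suc n)) ?T) j"
      by (simp add: PE_def coeff_sum)
    finally show "coeff (A p (Suc (Suc n))) j = coeff (PE (sp_net p (Suc n)) ?T) j" .
  qed
  also have "\<dots> = A p (Suc n) + smult (1 / real (Suc n)) (qp p * pderiv (A p (Suc n)))"
    unfolding A_def by (rule PE_lin)
  finally show ?thesis .
qed

lemma paths_base: "paths [(0,1)] = {[0]}"
proof -
  have "walk [(0,1)] 0 ps \<longleftrightarrow> ps = [0]" for ps
    by (cases ps; cases "tl ps") auto
  then show ?thesis by (auto simp: paths_def)
qed

lemma A_1: "A p (Suc 0) = PX"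
proof -
  have "paths [(0, Suc 0)] = {[0]}" using paths_base by simp
  then show ?thesis by (simp add: A_def PE_return FP_def)
qed

lemma EP_A: "EP p (Suc n) = poly (A p (Suc n)) 1"
proof -
  have "poly (FP G) 1 = real (num_paths G)" for G
    by (simp add: FP_def poly_sum num_paths_eq PX_def)
  then show ?thesis
    unfolding EP_def A_def using sp_support[of p n] by (simp add: poly_PE)
qed



lemma alg_core:
  fixes y g g1 h h1 h2 e e1 a b :: "'a::comm_ring_1"
  assumes "y*g = 1" "y*g1 = g" "y*h1 = e + h" "y*h2 = e1 + 2*h1"
  shows "y*(h2 - a*(h1*g + h*g1) - b*(h1*h + h*h1)) = (e1 - a*e*g - b*(e*h + h*e)) + 2*(h1 - a*h*g - b*h*h)"
proof -
  have "y*(h2 - a*(h1*g + h*g1) - b*(h1*h + h*h1)) = y*h2 - a*(y*h1)*g - a*h*(y*g1) - 2*b*h*(y*h1)"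
    by (simp add: algebra_simps)
  also have "\<dots> = (e1 + 2*h1) - a*(e + h)*g - a*h*g - 2*b*h*(e + h)"
    by (simp only: assms)
  also have "\<dots> = (e1 - a*e*g - b*(e*h + h*e)) + 2*(h1 - a*h*g - b*h*h)"
    by (simp add: algebra_simps)
  finally show ?thesis .
qed

definition Dp :: "real \<Rightarrow> real poly \<Rightarrow> real poly" where "Dp p a = qp p * pderiv a"

lemma Dp_add: "Dp p (a + b) = Dp p a + Dp p b" by (simp add: Dp_def pderiv_add algebra_simps)
lemma Dp_diff: "Dp p (a - b) = Dp p a - Dp p b" by (simp add: Dp_def pderiv_diff algebra_simps)
lemma Dp_mult: "Dp p (a * b) = Dp p a * b + a * Dp p b" by (simp add: Dp_def pderiv_mult algebra_simps)
lemma Dp_sum: "Dp p (sum f S) = (\<Sum>x\<in>S. Dp p (f x))" by (simp add: Dp_def pderiv_sum sum_distrib_left)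
lemma Dp_const[simp]: "Dp p [:c:] = 0" by (simp add: Dp_def)
lemma Dp_0[simp]: "Dp p 0 = 0" by (simp add: Dp_def)
lemma Dp_1[simp]: "Dp p 1 = 0" by (simp add: Dp_def)
lemma Dp_of_nat0[simp]: "Dp p (of_nat k) = 0" by (simp add: Dp_def)
lemma Dp_of_nat: "Dp p (of_nat k * a) = of_nat k * Dp p a" by (simp add: Dp_mult)

definition Dfps :: "real \<Rightarrow> real poly fps \<Rightarrow> real poly fps" where
  "Dfps p F = Abs_fps (\<lambda>n. Dp p (fps_nth F n))"

lemma Dfps_nth[simp]: "fps_nth (Dfps p F) n = Dp p (fps_nth F n)" by (simp add: Dfps_def)

lemma Dfps_add: "Dfps p (F + G) = Dfps p F + Dfps p G" by (rule fps_ext) (simp add: Dp_add)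
lemma Dfps_diff: "Dfps p (F - G) = Dfps p F - Dfps p G" by (rule fps_ext) (simp add: Dp_diff)
lemma Dfps_mult: "Dfps p (F * G) = Dfps p F * G + F * Dfps p G"
  by (rule fps_ext) (simp add: fps_mult_nth Dp_sum Dp_mult sum.distrib)
lemma Dfps_const: "Dfps p (fps_const [:c:]) = 0" by (rule fps_ext) simp
lemma Dfps_deriv: "Dfps p (fps_deriv F) = fps_deriv (Dfps p F)"
  by (rule fps_ext) (simp add: Dp_mult Dp_add)

definition geo :: "real poly fps" where "geo = Abs_fps (\<lambda>_. 1)"

lemma Dfps_geo: "Dfps p geo = 0" by (rule fps_ext) (simp add: geo_def)

lemma one_minus_X_mult_nth: "fps_nth ((1 - fps_X) * (F::real poly fps)) n = fps_nth F n - (if n = 0 then 0 else fps_nth F (n - 1))"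
proof -
  have "(1 - fps_X) * F = F - fps_X * F" by (simp add: algebra_simps)
  then show ?thesis by (simp only: fps_sub_nth fps_X_mult_nth)
qed

lemma geo1: "(1 - fps_X) * geo = 1"
  by (rule fps_ext) (simp add: one_minus_X_mult_nth geo_def)

lemma geo2: "(1 - fps_X) * fps_deriv geo = geo"
  by (rule fps_ext) (auto simp: one_minus_X_mult_nth geo_def algebra_simps)



context
  fixes p :: real
  assumes p01: "0 \<le> p" "p \<le> 1"
begin

definition HH :: "real poly fps" where "HH = Abs_fps (\<lambda>k. A p (Suc k))"
definition GG :: "real poly fps" where
  "GG = fps_deriv HH - fps_const [:2*p:] * HH * geo - fps_const [:1-p:] * HH * HH"

lemma HH_nth[simp]: "fps_nth HH k = A p (Suc k)" by (simp add: HH_def)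

lemma A_rec': "of_nat (n+1) * A p (Suc (Suc n)) = of_nat (n+1) * A p (Suc n) + Dp p (A p (Suc n))"
proof -
  have "of_nat (n+1) * smult (1 / real (Suc n)) (qp p * pderiv (A p (Suc n))) = Dp p (A p (Suc n))"
    by (simp add: of_nat_mult_conv_smult Dp_def del: of_nat_Suc)
  then show ?thesis unfolding A_rec[OF p01, of n] by (simp add: distrib_left del: of_nat_Suc)
qed

lemma K0: "(1 - fps_X) * fps_deriv HH = Dfps p HH + HH"
proof (rule fps_ext)
  fix n
  show "fps_nth ((1 - fps_X) * fps_deriv HH) n = fps_nth (Dfps p HH + HH) n"
  proof (cases n)
    case 0 then show ?thesis using A_rec'[of 0] by (simp add: one_minus_X_mult_nth)
  next
    case (Suc m)
    have "of_nat (n+1) * A p (Suc (Suc n)) - of_nat n * A p (Suc n) = Dp p (A p (Suc n)) + A p (Suc n)"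
      unfolding A_rec'[of n] by (simp add: algebra_simps)
    then show ?thesis using Suc by (simp add: one_minus_X_mult_nth fps_deriv_nth del: of_nat_Suc)
  qed
qed

lemma K1: "(1 - fps_X) * fps_deriv (fps_deriv HH) = fps_deriv (Dfps p HH) + 2 * fps_deriv HH"
proof -
  have "fps_deriv ((1 - fps_X) * fps_deriv HH) = fps_deriv (Dfps p HH + HH)" by (simp only: K0)
  then have "(1 - fps_X) * fps_deriv (fps_deriv HH) - fps_deriv HH = fps_deriv (Dfps p HH) + fps_deriv HH"
    by (simp add: fps_deriv_mult fps_deriv_fps_X algebra_simps)
  then show ?thesis by (simp add: algebra_simps)
qed

lemma GG_eq: "(1 - fps_X) * fps_deriv GG = Dfps p GG + 2 * GG"
proof -
  let ?a = "fps_const [:2*p:]" and ?b = "fps_const [:1-p:]"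
  have d1: "fps_deriv GG = fps_deriv (fps_deriv HH) - ?a * (fps_deriv HH * geo + HH * fps_deriv geo)
       - ?b * (fps_deriv HH * HH + HH * fps_deriv HH)"
    unfolding GG_def by (simp add: fps_deriv_mult algebra_simps)
  have d2: "Dfps p GG = fps_deriv (Dfps p HH) - ?a * Dfps p HH * geo - ?b * (Dfps p HH * HH + HH * Dfps p HH)"
    unfolding GG_def by (simp only: Dfps_diff Dfps_mult Dfps_const Dfps_geo Dfps_deriv) (simp add: algebra_simps)
  have g: "GG = fps_deriv HH - ?a * HH * geo - ?b * HH * HH" by (simp add: GG_def)
  show ?thesis unfolding d1 d2 g[symmetric]
    by (rule alg_core[where a="?a" and b="?b", OF geo1 geo2 K0 K1, unfolded g[symmetric]])
qed

lemma GG0: "fps_nth GG 0 = 0"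
proof -
  have "A p 2 = PX + qp p" using A_rec[OF p01, of 0] by (simp add: A_1 Dp_def numeral_2_eq_2 PX_def pderiv_pCons)
  then show ?thesis by (simp add: GG_def mult_nth_0 geo_def fps_deriv_nth A_1 PX_def qp_def numeral_2_eq_2)
qed

lemma GG_zero: "fps_nth GG n = 0"
proof (induction n)
  case 0 then show ?case by (rule GG0)
next
  case (Suc n)
  have "fps_nth ((1 - fps_X) * fps_deriv GG) n = fps_nth (Dfps p GG + 2 * GG) n" by (simp only: GG_eq)
  then have "of_nat (n+1) * fps_nth GG (Suc n) = 0"
    using Suc by (auto simp: one_minus_X_mult_nth fps_deriv_nth split: if_splits simp del: of_nat_Suc)
  then show ?case by (simp add: of_nat_mult_conv_smult del: of_nat_Suc)
qed

lemma quad_rec_poly: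
  "of_nat (n+1) * A p (Suc (Suc n)) = [:2*p:] * (\<Sum>i=0..n. A p (Suc i))
     + [:1-p:] * (\<Sum>i=0..n. A p (Suc i) * A p (Suc (n - i)))"
proof -
  have g: "GG = fps_deriv HH - fps_const [:2*p:] * (HH * geo) - fps_const [:1-p:] * (HH * HH)"
    by (simp add: GG_def mult.assoc)
  have "fps_nth GG n = 0" by (rule GG_zero)
  then have "fps_nth (fps_deriv HH) n - [:2*p:] * fps_nth (HH * geo) n - [:1-p:] * fps_nth (HH * HH) n = 0"
    unfolding g by (simp only: fps_sub_nth fps_mult_left_const_nth)
  then show ?thesis
    by (simp add: fps_mult_nth fps_deriv_nth geo_def del: of_nat_Suc)
qed

lemma quad_rec:
  "real (n+1) * EP p (Suc (Suc n)) = 2*p * (\<Sum>i=0..n. EP p (Suc i))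
     + (1-p) * (\<Sum>i=0..n. EP p (Suc i) * EP p (Suc (n - i)))"
proof -
  have "poly (of_nat (n+1) * A p (Suc (Suc n))) 1 = poly ([:2*p:] * (\<Sum>i=0..n. A p (Suc i))
     + [:1-p:] * (\<Sum>i=0..n. A p (Suc i) * A p (Suc (n - i)))) 1"
    by (simp only: quad_rec_poly)
  then show ?thesis by (simp add: EP_A poly_sum del: of_nat_Suc)
qed

end


lemma alg2:
  fixes a c w p :: real
  assumes "a \<noteq> 0" "c \<noteq> 0" "c = 1 - 2*p"
  shows "((1-p)*(-1) - p*(w*(-(2*p)/a)))/c = -2*p*(((1-p)*a - p*w)/c)/a - (1-p)"
proof -
  have "((1-p)*(-1) - p*(w*(-(2*p)/a)))/c = (-(1-p)*a + 2*p*p*w)/(c*a)"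
    using assms(1,2) by (simp add: field_simps)
  also have "-(1-p)*a + 2*p*p*w = -2*p*((1-p)*a - p*w) - (1-p)*c*a"
    unfolding assms(3) by (simp add: algebra_simps)
  also have "\<dots>/(c*a) = -2*p*(((1-p)*a - p*w)/c)/a - (1-p)"
    using assms(1,2) by (simp add: field_simps)
  finally show ?thesis .
qed

locale gfloc =
  fixes e :: "nat \<Rightarrow> real" and p :: real
  assumes p0: "0 < p" and p1: "p < 1" and e0: "e 0 = 1"
    and rec: "\<And>n. real (n+1) * e (Suc n) = 2*p * (\<Sum>i=0..n. e i) + (1-p) * (\<Sum>i=0..n. e i * e (n - i))"
begin

lemma bound: "0 \<le> e k \<and> e k \<le> 2 ^ k"
proof (induction k rule: less_induct)
  case (less k)
  show ?case
  proof (cases k)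
    case 0 then show ?thesis using e0 by simp
  next
    case (Suc n)
    have IH: "0 \<le> e i" "e i \<le> 2 ^ i" if "i \<le> n" for i using less Suc that by auto
    have s1: "(\<Sum>i=0..n. e i) \<le> real (n+1) * 2^n"
    proof -
      have "(\<Sum>i=0..n. e i) \<le> of_nat (card {0..n}) * 2^n"
      proof (rule sum_bounded_above)
        fix i assume "i \<in> {0..n}"
        then have "i \<le> n" by simp
        then have "e i \<le> 2^i" "(2::real)^i \<le> 2^n" using IH(2) power_increasing[of i n "2::real"] by auto
        then show "e i \<le> 2^n" by linarith
      qed
      then show ?thesis by simp
    qed
    have s2: "(\<Sum>i=0..n. e i * e (n - i)) \<le> real (n+1) * 2^n"
    proof -
      have "e i * e (n - i) \<le> 2^n" if "i \<in> {0..n}" for i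
      proof -
        have "e i * e (n - i) \<le> 2^i * 2^(n-i)"
          by (rule mult_mono) (use IH that in auto)
        also have "\<dots> = 2^n" using that by (simp add: power_add[symmetric])
        finally show ?thesis .
      qed
      then have "(\<Sum>i=0..n. e i * e (n - i)) \<le> of_nat (card {0..n}) * 2^n"
        by (rule sum_bounded_above)
      then show ?thesis by simp
    qed
    have n1: "0 \<le> (\<Sum>i=0..n. e i)" "0 \<le> (\<Sum>i=0..n. e i * e (n - i))"
      using IH by (auto intro!: sum_nonneg)
    have "real (n+1) * e (Suc n) \<le> 2*p * (real (n+1) * 2^n) + (1-p) * (real (n+1) * 2^n)"
      unfolding rec using s1 s2 p0 p1 by (intro add_mono mult_left_mono) auto
    also have "\<dots> \<le> real (n+1) * 2^(Suc n)"
    proof -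
      have X: "0 \<le> real (n+1) * 2^n" by simp
      have "(1+p) * (real (n+1) * 2^n) \<le> 2 * (real (n+1) * 2^n)"
        by (rule mult_right_mono[OF _ X]) (use p1 in simp)
      then show ?thesis by (simp add: algebra_simps)
    qed
    finally have up: "e (Suc n) \<le> 2 ^ Suc n" by (simp del: of_nat_Suc)
    have "0 \<le> real (n+1) * e (Suc n)" unfolding rec using n1 p0 p1 by simp
    then have "0 \<le> e (Suc n)" by (simp add: zero_le_mult_iff del: of_nat_Suc)
    then show ?thesis using up Suc by simp
  qed
qed

lemma pow_split: "i \<le> k \<Longrightarrow> (z::real) ^ i * z ^ (k - i) = z ^ k"
  by (simp add: power_add[symmetric])

lemma summ_abs: assumes "\<bar>z\<bar> < 1/2" shows "summable (\<lambda>k. norm (e k * z ^ k))"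
proof (rule summable_comparison_test)
  show "\<exists>N. \<forall>n\<ge>N. norm (norm (e n * z ^ n)) \<le> (2 * \<bar>z\<bar>) ^ n"
  proof (intro exI allI impI)
    fix n
    have "norm (norm (e n * z ^ n)) = e n * \<bar>z\<bar> ^ n" using bound[of n] by (simp add: abs_mult power_abs)
    also have "\<dots> \<le> 2^n * \<bar>z\<bar> ^ n" using bound[of n] by (intro mult_right_mono) auto
    finally show "norm (norm (e n * z ^ n)) \<le> (2 * \<bar>z\<bar>) ^ n" by (simp add: power_mult_distrib)
  qed
  show "summable (\<lambda>n. (2 * \<bar>z\<bar>) ^ n)" using assms by (intro summable_geometric) auto
qed

lemma summ: "\<bar>z\<bar> < 1/2 \<Longrightarrow> summable (\<lambda>k. e k * z ^ k)"
  by (rule summable_norm_cancel[OF summ_abs])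

definition S :: "real \<Rightarrow> real" where "S z = (\<Sum>k. e k * z ^ k)"

lemma S0: "S 0 = 1" using powser_zero[of e] e0 by (simp add: S_def)

lemma S_ode:
  assumes z: "\<bar>z\<bar> < 1/2"
  shows "(S has_real_derivative (2*p * S z / (1 - z) + (1-p) * S z ^ 2)) (at z)"
proof -
  define K where "K = (\<bar>z\<bar> + 1/2) / 2"
  have K: "\<bar>K\<bar> < 1/2" "norm z < norm K" using z by (auto simp: K_def)
  have d: "(S has_real_derivative (\<Sum>n. diffs e n * z ^ n)) (at z)"
    unfolding S_def by (rule termdiffs_strong[OF summ[OF K(1)] K(2)])
  have z1: "norm z < 1" using z by simp
  have c1: "(\<lambda>k. (\<Sum>i\<le>k. e i) * z ^ k) sums (S z * (1 / (1 - z)))"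
  proof -
    have "(\<lambda>k. \<Sum>i\<le>k. (e i * z ^ i) * z ^ (k - i)) sums ((\<Sum>k. e k * z ^ k) * (\<Sum>k. z ^ k))"
    proof (rule Cauchy_product_sums[OF summ_abs[OF z]])
      show "summable (\<lambda>k. norm (z ^ k))" using z1 by (simp add: power_abs summable_geometric_iff)
    qed
    moreover have "(\<Sum>i\<le>k. (e i * z ^ i) * z ^ (k - i)) = (\<Sum>i\<le>k. e i) * z ^ k" for k
    proof -
      have "(\<Sum>i\<le>k. (e i * z ^ i) * z ^ (k - i)) = (\<Sum>i\<le>k. e i * z ^ k)"
        by (rule sum.cong[OF refl]) (simp add: mult.assoc pow_split)
      then show ?thesis by (simp add: sum_distrib_right)
    qed
    moreover have "(\<Sum>k. z ^ k) = 1 / (1 - z)" using geometric_sums[OF z1] by (simp add: sums_iff)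
    ultimately show ?thesis by (simp add: S_def)
  qed
  have c2: "(\<lambda>k. (\<Sum>i\<le>k. e i * e (k - i)) * z ^ k) sums (S z * S z)"
  proof -
    have "(\<lambda>k. \<Sum>i\<le>k. (e i * z ^ i) * (e (k - i) * z ^ (k - i))) sums ((\<Sum>k. e k * z ^ k) * (\<Sum>k. e k * z ^ k))"
      by (rule Cauchy_product_sums[OF summ_abs[OF z] summ_abs[OF z]])
    moreover have "(\<Sum>i\<le>k. (e i * z ^ i) * (e (k - i) * z ^ (k - i))) = (\<Sum>i\<le>k. e i * e (k - i)) * z ^ k" for k
    proof -
      have "(\<Sum>i\<le>k. (e i * z ^ i) * (e (k - i) * z ^ (k - i))) = (\<Sum>i\<le>k. e i * e (k - i) * z ^ k)"
        by (rule sum.cong[OF refl]) (simp add: pow_split[symmetric] mult_ac)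
      then show ?thesis by (simp add: sum_distrib_right)
    qed
    ultimately show ?thesis by (simp add: S_def)
  qed
  have "(\<lambda>n. diffs e n * z ^ n) sums (2*p * (S z * (1 / (1 - z))) + (1-p) * (S z * S z))"
  proof -
    have "diffs e n * z ^ n = 2*p * ((\<Sum>i\<le>n. e i) * z ^ n) + (1-p) * ((\<Sum>i\<le>n. e i * e (n - i)) * z ^ n)" for n
    proof -
      have "diffs e n * z ^ n = (real (n+1) * e (Suc n)) * z ^ n" by (simp add: diffs_def)
      also have "\<dots> = (2*p * (\<Sum>i=0..n. e i) + (1-p) * (\<Sum>i=0..n. e i * e (n - i))) * z ^ n"
        by (simp only: rec)
      finally show ?thesis by (simp add: atLeast0AtMost algebra_simps)
    qed
    then show ?thesis using sums_add[OF sums_mult[OF c1] sums_mult[OF c2]] by simp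
  qed
  then have "(\<Sum>n. diffs e n * z ^ n) = 2*p * S z / (1 - z) + (1-p) * S z ^ 2"
    by (simp add: sums_iff power2_eq_square)
  then show ?thesis using d by simp
qed


lemma S_pos: "\<exists>r>0. r \<le> 1/2 \<and> (\<forall>z. \<bar>z\<bar> < r \<longrightarrow> S z > 0)"
proof -
  have "isCont S 0" using S_ode[of 0] by (intro DERIV_isCont) auto
  then obtain d where d: "d > 0" "\<And>x. dist x 0 < d \<Longrightarrow> dist (S x) (S 0) < 1/2"
    unfolding continuous_at_eps_delta by (metis less_divide_eq_numeral1(1) mult_eq_0_iff
        one_neq_zero zero_less_one zero_neq_numeral zero_less_divide_iff zero_less_numeral)
  show ?thesis
  proof (intro exI conjI allI impI)
    show "min d (1/2) > 0" "min d (1/2) \<le> 1/2" using d by auto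
    fix z assume "\<bar>z\<bar> < min d (1/2)"
    then have "dist (S z) 1 < 1/2" using d S0 by (simp add: dist_real_def)
    then have "\<bar>S z - 1\<bar> < 1/2" by (simp add: dist_real_def)
    then show "S z > 0" using abs_less_iff[of "S z - 1" "1/2"] by linarith
  qed
qed

definition T :: "real \<Rightarrow> real" where
  "T z = (if p \<noteq> 1/2 then ((1-p)*(1-z) - p*(1-z) powr (2*p))/(1-2*p)
          else (2*(1-z) + (1-z)*ln(1-z))/2)"

lemma T0: "T 0 = 1"
  using p0 p1 by (auto simp: T_def field_simps)

lemma powr_deriv:
  assumes "z < 1"
  shows "((\<lambda>z. (1-z) powr a) has_real_derivative ((1-z) powr a * (- a / (1-z)))) (at z)"
proof -
  have "((\<lambda>z. (1-z) powr ((\<lambda>_. a) z)) has_real_derivative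
      (1-z) powr a * (0 * ln (1-z) + (-1) * a / (1-z))) (at z)"
    by (rule DERIV_powr) (use assms in \<open>auto intro!: derivative_eq_intros\<close>)
  then show ?thesis by simp
qed

lemma T_deriv:
  assumes "z < 1"
  shows "(T has_real_derivative (-2*p*T z/(1-z) - (1-p))) (at z)"
proof (cases "p = 1/2")
  case False
  let ?w = "(1-z) powr (2*p)"
  have Tf: "T = (\<lambda>z. ((1-p)*(1-z) - p*(1-z) powr (2*p))/(1-2*p))" using False by (auto simp: T_def)
  have D: "((\<lambda>z. ((1-p)*(1-z) - p*(1-z) powr (2*p))/(1-2*p)) has_real_derivative
       ((1-p)*(-1) - p*(?w * (-(2*p)/(1-z))))/(1-2*p)) (at z)"
    by (intro DERIV_cdivide DERIV_diff DERIV_cmult powr_deriv assms) (auto intro!: derivative_eq_intros)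
  have ne: "1 - z \<noteq> 0" "1 - 2*p \<noteq> 0" using assms False by auto
  have "((1-p)*(-1) - p*(?w * (-(2*p)/(1-z))))/(1-2*p) = -2*p*T z/(1-z) - (1-p)"
    unfolding Tf by (rule alg2[OF ne refl])
  then show ?thesis using D unfolding Tf by simp
next
  case True
  have Tf: "T = (\<lambda>z. (2*(1-z) + (1-z)*ln(1-z))/2)" using True by (auto simp: T_def)
  have D: "((\<lambda>z. (2*(1-z) + (1-z)*ln(1-z))/2) has_real_derivative
       (2*(-1) + ((-1)*ln(1-z) + (1-z)*((-1)/(1-z))))/2) (at z)"
    using assms by (auto intro!: derivative_eq_intros simp: field_simps)
  have ne: "1 - z \<noteq> 0" using assms by auto
  have E: "(2*(-1) + ((-1)*ln(1-z) + (1-z)*((-1)/(1-z))))/2 = -2*p*T z/(1-z) - (1-p)"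
    unfolding Tf using ne True by (simp add: field_simps)
  show ?thesis unfolding E[symmetric] by (subst Tf, rule D)
qed


lemma gf_final:
  "\<exists>r>0. \<forall>z. \<bar>z\<bar> < r \<longrightarrow> (\<lambda>m. e m * z ^ m) sums
     (if p \<noteq> 1/2 then (1 - 2 * p) / ((1 - p) * (1 - z) - p * (1 - z) powr (2 * p))
      else 2 / (2 * (1 - z) - (1 - z) * ln (1 / (1 - z))))"
proof -
  obtain r where r: "r > 0" "r \<le> 1/2" "\<And>z. \<bar>z\<bar> < r \<Longrightarrow> S z > 0" using S_pos by blast
  define W where "W x = (1-x) powr (-2*p) * (inverse (S x) - T x)" for x
  have Wd: "(W has_real_derivative 0) (at x)" if x: "x \<in> {-r<..<r}" for x
  proof -
    have ax: "\<bar>x\<bar> < r" "\<bar>x\<bar> < 1/2" "x < 1" using x r by auto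
    have Sx: "S x \<noteq> 0" using r(3)[OF ax(1)] by simp
    have x1: "1 - x \<noteq> 0" using ax by simp
    have ud: "((\<lambda>x. inverse (S x)) has_real_derivative
        - ((2*p * S x / (1 - x) + (1-p) * S x ^ 2) * inverse (S x ^ Suc (Suc 0)))) (at x)"
      by (rule DERIV_inverse_fun[OF S_ode[OF ax(2)] Sx])
    have ueq: "- ((2*p * S x / (1 - x) + (1-p) * S x ^ 2) * inverse (S x ^ Suc (Suc 0)))
        = -2*p*inverse (S x)/(1-x) - (1-p)"
      using Sx x1 by (simp add: field_simps power2_eq_square)
    have D: "(W has_real_derivative
        ((1-x) powr (-2*p) * (- (-2*p) / (1-x))) * (inverse (S x) - T x)
        + ((-2*p*inverse (S x)/(1-x) - (1-p)) - (-2*p*T x/(1-x) - (1-p))) * (1-x) powr (-2*p)) (at x)"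
      unfolding W_def
      by (rule DERIV_mult[OF powr_deriv[OF ax(3)] DERIV_diff[OF ud[unfolded ueq] T_deriv[OF ax(3)]]])
    have "((1-x) powr (-2*p) * (- (-2*p) / (1-x))) * (inverse (S x) - T x)
        + ((-2*p*inverse (S x)/(1-x) - (1-p)) - (-2*p*T x/(1-x) - (1-p))) * (1-x) powr (-2*p) = 0"
      using x1 by (simp add: field_simps)
    then show ?thesis using D by simp
  qed
  have W0: "W 0 = 0" using S0 T0 by (simp add: W_def)
  show ?thesis
  proof (intro exI conjI allI impI)
    show "r > 0" by fact
    fix z assume z: "\<bar>z\<bar> < r"
    then have zi: "z \<in> {-r<..<r}" by auto
    have "W z = W 0" by (rule DERIV_isconst3[of "-r" r z 0 W]) (use r zi Wd in auto)
    then have "W z = 0" using W0 by simp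
    moreover have "(1-z) powr (-2*p) > 0" using z r by simp
    ultimately have "inverse (S z) = T z" by (simp add: W_def)
    then have Sz: "S z = inverse (T z)" by (metis inverse_inverse_eq)
    have sums: "(\<lambda>m. e m * z ^ m) sums S z"
      unfolding S_def by (rule summable_sums[OF summ]) (use z r in auto)
    have z1: "0 < 1 - z" using z r by auto
    have "inverse (T z) = (if p \<noteq> 1/2 then (1 - 2 * p) / ((1 - p) * (1 - z) - p * (1 - z) powr (2 * p))
      else 2 / (2 * (1 - z) - (1 - z) * ln (1 / (1 - z))))"
    proof (cases "p = 1/2")
      case True
      have "ln (1 / (1 - z)) = - ln (1 - z)" using z1 by (simp add: ln_div)
      then show ?thesis using True by (simp add: T_def inverse_divide)
    next
      case False then show ?thesis by (simp add: T_def inverse_divide)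
    qed
    then show "(\<lambda>m. e m * z ^ m) sums (if p \<noteq> 1/2 then (1 - 2 * p) / ((1 - p) * (1 - z) - p * (1 - z) powr (2 * p))
      else 2 / (2 * (1 - z) - (1 - z) * ln (1 / (1 - z))))" using sums Sz by simp
  qed
qed

end

theorem mainTheorem4:
  fixes p :: real
  assumes "0 < p" and "p < 1"
  shows "EP p 1 = 1
    \<and> (\<forall>n\<ge>2. EP p n = 2 * p / real (n - 1) * (\<Sum>k=1..n-1. EP p k)
                    + (1 - p) / real (n - 1) * (\<Sum>k=1..n-1. EP p k * EP p (n - k)))
    \<and> (\<exists>r>0. \<forall>z::real. \<bar>z\<bar> < r \<longrightarrow>
          (\<lambda>m. EP p (m + 1) * z ^ m) sums
            (if p \<noteq> 1/2
             then (1 - 2 * p) / ((1 - p) * (1 - z) - p * (1 - z) powr (2 * p))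
             else 2 / (2 * (1 - z) - (1 - z) * ln (1 / (1 - z)))))"
proof -
  have p01: "0 \<le> p" "p \<le> 1" using assms by auto
  have E1: "EP p 1 = 1" using EP_A[of p 0] A_1[of p] by (simp add: PX_def)
  have R: "EP p n = 2 * p / real (n - 1) * (\<Sum>k=1..n-1. EP p k)
                    + (1 - p) / real (n - 1) * (\<Sum>k=1..n-1. EP p k * EP p (n - k))" if "n \<ge> 2" for n
  proof -
    define m where "m = n - 2"
    have n: "n = Suc (Suc m)" using that by (simp add: m_def)
    have s1: "(\<Sum>k=1..n-1. EP p k) = (\<Sum>i=0..m. EP p (Suc i))"
      unfolding n using sum.shift_bounds_cl_Suc_ivl[of "EP p" 0 m] by simp
    have s2: "(\<Sum>k=1..n-1. EP p k * EP p (n - k)) = (\<Sum>i=0..m. EP p (Suc i) * EP p (Suc (m - i)))"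
    proof -
      have "(\<Sum>k=1..n-1. EP p k * EP p (n - k)) = (\<Sum>i=0..m. EP p (Suc i) * EP p (n - Suc i))"
        unfolding n using sum.shift_bounds_cl_Suc_ivl[of "\<lambda>k. EP p k * EP p (Suc (Suc m) - k)" 0 m] by simp
      also have "\<dots> = (\<Sum>i=0..m. EP p (Suc i) * EP p (Suc (m - i)))"
        by (rule sum.cong[OF refl]) (simp add: n Suc_diff_le)
      finally show ?thesis .
    qed
    have q: "real (m+1) * EP p (Suc (Suc m)) = 2*p * (\<Sum>i=0..m. EP p (Suc i))
      + (1-p) * (\<Sum>i=0..m. EP p (Suc i) * EP p (Suc (m - i)))" by (rule quad_rec[OF p01])
    have nm: "real (n - 1) = real (m+1)" using n by simp
    have ne: "real (m+1) \<noteq> 0" by simp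
    have "EP p (Suc (Suc m)) = (2*p * (\<Sum>i=0..m. EP p (Suc i))
      + (1-p) * (\<Sum>i=0..m. EP p (Suc i) * EP p (Suc (m - i)))) / real (m+1)"
      using q ne by (simp add: eq_divide_eq mult.commute)
    then show ?thesis unfolding s1 s2 nm by (simp only: n add_divide_distrib times_divide_eq_left)
  qed
  interpret gfloc "\<lambda>k. EP p (Suc k)" p
  proof
    show "0 < p" "p < 1" by (rule assms)+
    show "EP p (Suc 0) = 1" using E1 by simp
    fix n
    show "real (n+1) * EP p (Suc (Suc n)) = 2*p * (\<Sum>i=0..n. EP p (Suc i)) + (1-p) * (\<Sum>i=0..n. EP p (Suc i) * EP p (Suc (n - i)))"
      by (rule quad_rec[OF p01])
  qed
  have G: "\<exists>r>0. \<forall>z::real. \<bar>z\<bar> < r \<longrightarrow>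
          (\<lambda>m. EP p (m + 1) * z ^ m) sums
            (if p \<noteq> 1/2
             then (1 - 2 * p) / ((1 - p) * (1 - z) - p * (1 - z) powr (2 * p))
             else 2 / (2 * (1 - z) - (1 - z) * ln (1 / (1 - z))))"
    using gf_final by simp
  show ?thesis using E1 R G by (intro conjI allI impI) auto
qed

end
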